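(* Let $G$ be a graph. If $H$ is a maximal $r$-correspondence-deletable subgraph of $G$ (i.e., no $r$-correspondence-deletable subgraph of $G$ properly contains $H$), then $G-V(H)$ does not contain an $r$-correspondence-deletable subgraph (with respect to $G-V(H)$).
   Context: All graphs are finite and simple. A correspondence assignment for a graph $H$ is a pair $(L,M)$ where $L$ assigns to each vertex $v$ a list $L(v)$ of colours and $M$ assigns to each edge $e=uv$ a partial matching $M_e$ between $\{u\}\times L(u)$ and $\{v\}\times L(v)$; an $(L,M)$-colouring is a choice $\varphi(v)\in L(v)$ for every $v$ such that for every edge $uv$, $(u,\varphi(u))$ and $(v,\varphi(v))$ are not matched in $M_{uv}$. A nonempty induced subgraph $H$ of a graph $G$ is $r$-correspondence-deletable (in $G$) if for every correspondence assignment $(L,M)$ of $H$ with $|L(v)|\ge r-(\deg_G(v)-\deg_H(v))$ for each $v\in V(H)$, $H$ has an $(L,M)$-colouring. *)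

theory Defs
  imports Main
begin

text \<open>A finite simple graph: finite vertex set V, symmetric irreflexive
adjacency E (adjacency outside V is ignored; only vertices in V are counted).\<close>
definition graph :: "'a set \<Rightarrow> ('a \<Rightarrow> 'a \<Rightarrow> bool) \<Rightarrow> bool" where
  "graph V E \<longleftrightarrow> finite V \<and> (\<forall>u v. E u v \<longrightarrow> E v u) \<and> (\<forall>v. \<not> E v v)"

definition deg :: "'a set \<Rightarrow> ('a \<Rightarrow> 'a \<Rightarrow> bool) \<Rightarrow> 'a \<Rightarrow> nat" where
  "deg V E v = card {u \<in> V. E v u}"

text \<open>Correspondence assignment (L, M) for the graph induced on S:
L v is a finite list of colours; M u v c d means that (u,c) and (v,d) are
matched in the matching M_uv; M is symmetric and each M_uv is a partial
matching between {u} x L u and {v} x L v, defined only on edges.\<close>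
definition corr_assignment ::
  "'a set \<Rightarrow> ('a \<Rightarrow> 'a \<Rightarrow> bool) \<Rightarrow> ('a \<Rightarrow> nat set) \<Rightarrow> ('a \<Rightarrow> 'a \<Rightarrow> nat \<Rightarrow> nat \<Rightarrow> bool) \<Rightarrow> bool" where
  "corr_assignment S E L M \<longleftrightarrow>
     (\<forall>v\<in>S. finite (L v)) \<and>
     (\<forall>u v c d. M u v c d \<longrightarrow> u \<in> S \<and> v \<in> S \<and> E u v \<and> c \<in> L u \<and> d \<in> L v) \<and>
     (\<forall>u v c d. M u v c d \<longleftrightarrow> M v u d c) \<and>
     (\<forall>u v c d d'. M u v c d \<and> M u v c d' \<longrightarrow> d = d')"

definition corr_colouring ::
  "'a set \<Rightarrow> ('a \<Rightarrow> 'a \<Rightarrow> bool) \<Rightarrow> ('a \<Rightarrow> nat set) \<Rightarrow> ('a \<Rightarrow> 'a \<Rightarrow> nat \<Rightarrow> nat \<Rightarrow> bool)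
     \<Rightarrow> ('a \<Rightarrow> nat) \<Rightarrow> bool" where
  "corr_colouring S E L M \<phi> \<longleftrightarrow>
     (\<forall>v\<in>S. \<phi> v \<in> L v) \<and>
     (\<forall>u\<in>S. \<forall>v\<in>S. E u v \<longrightarrow> \<not> M u v (\<phi> u) (\<phi> v))"

text \<open>The induced subgraph G[S] of G = (V,E) is r-correspondence-deletable in G.\<close>
definition corr_deletable :: "nat \<Rightarrow> 'a set \<Rightarrow> ('a \<Rightarrow> 'a \<Rightarrow> bool) \<Rightarrow> 'a set \<Rightarrow> bool" where
  "corr_deletable r V E S \<longleftrightarrow> S \<noteq> {} \<and> S \<subseteq> V \<and>
     (\<forall>L M. corr_assignment S E L M \<and>
        (\<forall>v\<in>S. int (card (L v)) \<ge> int r - (int (deg V E v) - int (deg S E v)))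
        \<longrightarrow> (\<exists>\<phi>. corr_colouring S E L M \<phi>))"

end

theory Submission
  imports Defs
begin

lemma deg_split:
  assumes "finite A" "A \<inter> B = {}" "finite B"
  shows "deg (A \<union> B) E v = deg A E v + deg B E v"
proof -
  have "{u \<in> A \<union> B. E v u} = {u \<in> A. E v u} \<union> {u \<in> B. E v u}" by auto
  moreover have "card ({u \<in> A. E v u} \<union> {u \<in> B. E v u}) = card {u \<in> A. E v u} + card {u \<in> B. E v u}"
    by (rule card_Un_disjoint) (use assms in auto)
  ultimately show ?thesis unfolding deg_def by simp
qed

theorem mainTheorem17:
  fixes V H :: "'a set" and E :: "'a \<Rightarrow> 'a \<Rightarrow> bool" and r :: nat
  assumes "graph V E"
    and "corr_deletable r V E H"
    and "\<forall>H'. H \<subset> H' \<and> H' \<subseteq> V \<longrightarrow> \<not> corr_deletable r V E H'"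
  shows "\<not> (\<exists>T. T \<subseteq> V - H \<and> corr_deletable r (V - H) E T)"
proof
  assume "\<exists>T. T \<subseteq> V - H \<and> corr_deletable r (V - H) E T"
  then obtain T where TV: "T \<subseteq> V - H" and Td: "corr_deletable r (V - H) E T" by blast
  have finV: "finite V" using assms(1) unfolding graph_def by blast
  have HV: "H \<subseteq> V" "H \<noteq> {}" using assms(2) unfolding corr_deletable_def by auto
  have Tne: "T \<noteq> {}" using Td unfolding corr_deletable_def by auto
  have finH: "finite H" using HV finV finite_subset by blast
  have finT: "finite T" using TV finV finite_subset by blast
  have disj: "H \<inter> T = {}" using TV by blast
  have TcolT: "\<forall>L M. corr_assignment T E L M \<and>
        (\<forall>v\<in>T. int (card (L v)) \<ge> int r - (int (deg (V - H) E v) - int (deg T E v)))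
        \<longrightarrow> (\<exists>\<phi>. corr_colouring T E L M \<phi>)" using Td unfolding corr_deletable_def by blast
  have HcolH: "\<forall>L M. corr_assignment H E L M \<and>
        (\<forall>v\<in>H. int (card (L v)) \<ge> int r - (int (deg V E v) - int (deg H E v)))
        \<longrightarrow> (\<exists>\<phi>. corr_colouring H E L M \<phi>)" using assms(2) unfolding corr_deletable_def by blast
  have degV: "deg V E v = deg (V - H) E v + deg H E v" for v
  proof -
    have "V = (V - H) \<union> H" using HV by blast
    then have "deg V E v = deg ((V - H) \<union> H) E v" by simp
    also have "\<dots> = deg (V - H) E v + deg H E v"
      by (rule deg_split) (use finV finH in auto)
    finally show ?thesis .
  qed
  have degHT: "deg (H \<union> T) E v = deg H E v + deg T E v" for v
    by (rule deg_split[OF finH disj finT])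
  have "corr_deletable r V E (H \<union> T)"
    unfolding corr_deletable_def
  proof (intro conjI allI impI)
    show "H \<union> T \<noteq> {}" using HV by blast
    show "H \<union> T \<subseteq> V" using HV TV by blast
    fix L M
    assume a: "corr_assignment (H \<union> T) E L M \<and>
      (\<forall>v\<in>H \<union> T. int r - (int (deg V E v) - int (deg (H \<union> T) E v)) \<le> int (card (L v)))"
    have finL: "\<forall>v\<in>H \<union> T. finite (L v)" and
      Mdom: "\<forall>u v c d. M u v c d \<longrightarrow> u \<in> H \<union> T \<and> v \<in> H \<union> T \<and> E u v \<and> c \<in> L u \<and> d \<in> L v" and
      Msym: "\<forall>u v c d. M u v c d \<longleftrightarrow> M v u d c" and
      Mfun: "\<forall>u v c d d'. M u v c d \<and> M u v c d' \<longrightarrow> d = d'"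
      using a unfolding corr_assignment_def by blast+
    have cardL: "\<forall>v\<in>H \<union> T. int r - (int (deg V E v) - int (deg (H \<union> T) E v)) \<le> int (card (L v))"
      using a by blast
    define MT where "MT = (\<lambda>u v c d. M u v c d \<and> u \<in> T \<and> v \<in> T)"
    have "corr_assignment T E L MT"
      unfolding corr_assignment_def MT_def using finL Mdom Msym Mfun by blast
    moreover have "\<forall>v\<in>T. int (card (L v)) \<ge> int r - (int (deg (V - H) E v) - int (deg T E v))"
      using cardL degV degHT by force
    ultimately obtain \<phi>T where phT: "corr_colouring T E L MT \<phi>T" using TcolT by blast
    define L' where "L' = (\<lambda>v. L v - {c. \<exists>u\<in>T. E v u \<and> M v u c (\<phi>T u)})"
    define MH where "MH = (\<lambda>u v c d. M u v c d \<and> u \<in> H \<and> v \<in> H \<and> c \<in> L' u \<and> d \<in> L' v)"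
    have "corr_assignment H E L' MH"
      unfolding corr_assignment_def MH_def
    proof (intro conjI)
      show "\<forall>v\<in>H. finite (L' v)" unfolding L'_def using finL by auto
    qed (use Mdom Msym Mfun in blast)+
    moreover have "\<forall>v\<in>H. int (card (L' v)) \<ge> int r - (int (deg V E v) - int (deg H E v))"
    proof
      fix v assume vH: "v \<in> H"
      define R where "R = (\<Union>u\<in>{u \<in> T. E v u}. {c. M v u c (\<phi>T u)})"
      have RR: "{c. \<exists>u\<in>T. E v u \<and> M v u c (\<phi>T u)} = R" unfolding R_def by blast
      have fLv: "finite (L v)" using finL vH by blast
      have RL: "R \<subseteq> L v" unfolding R_def using Mdom by blast
      have c1: "card {c. M v u c (\<phi>T u)} \<le> 1" for u
      proof -
        have "{c. M v u c (\<phi>T u)} \<subseteq> L v" using Mdom by blast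
        then have f: "finite {c. M v u c (\<phi>T u)}" using fLv finite_subset by blast
        have "\<forall>x\<in>{c. M v u c (\<phi>T u)}. \<forall>y\<in>{c. M v u c (\<phi>T u)}. x = y"
          using Msym Mfun by blast
        then show ?thesis using card_le_Suc0_iff_eq[OF f] by simp
      qed
      have "card R \<le> (\<Sum>u\<in>{u \<in> T. E v u}. card {c. M v u c (\<phi>T u)})"
        unfolding R_def by (rule card_UN_le) (use finT in simp)
      also have "\<dots> \<le> (\<Sum>u\<in>{u \<in> T. E v u}. 1)" by (rule sum_mono) (use c1 in blast)
      also have "\<dots> = deg T E v" unfolding deg_def by simp
      finally have cR: "card R \<le> deg T E v" .
      have "card (L' v) = card (L v - R)" unfolding L'_def RR ..
      also have "\<dots> = card (L v) - card R" using card_Diff_subset[OF finite_subset[OF RL fLv] RL] .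
      finally have "int (card (L' v)) = int (card (L v)) - int (card R)"
        using card_mono[OF fLv RL] by simp
      then show "int (card (L' v)) \<ge> int r - (int (deg V E v) - int (deg H E v))"
        using cR cardL vH degHT[of v] by force
    qed
    ultimately obtain \<phi>H where phH: "corr_colouring H E L' MH \<phi>H" using HcolH by blast
    define \<phi> where "\<phi> = (\<lambda>v. if v \<in> H then \<phi>H v else \<phi>T v)"
    have pH1: "\<forall>v\<in>H. \<phi>H v \<in> L' v" and pH2: "\<forall>u\<in>H. \<forall>v\<in>H. E u v \<longrightarrow> \<not> MH u v (\<phi>H u) (\<phi>H v)"
      using phH unfolding corr_colouring_def by blast+
    have pT1: "\<forall>v\<in>T. \<phi>T v \<in> L v" and pT2: "\<forall>u\<in>T. \<forall>v\<in>T. E u v \<longrightarrow> \<not> MT u v (\<phi>T u) (\<phi>T v)"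
      using phT unfolding corr_colouring_def by blast+
    have "corr_colouring (H \<union> T) E L M \<phi>"
      unfolding corr_colouring_def
    proof (intro conjI ballI impI)
      fix v assume "v \<in> H \<union> T" then show "\<phi> v \<in> L v"
        using pH1 pT1 disj unfolding \<phi>_def L'_def by auto
    next
      fix u v assume u: "u \<in> H \<union> T" and v: "v \<in> H \<union> T" and e: "E u v"
      show "\<not> M u v (\<phi> u) (\<phi> v)"
      proof (cases "u \<in> H")
        case True
        note uH = True
        show ?thesis
        proof (cases "v \<in> H")
          case True
          then show ?thesis using uH pH1 pH2 e unfolding \<phi>_def MH_def by auto
        next
          case False
          then have "v \<in> T" using v by blast
          then show ?thesis using uH False pH1 e unfolding \<phi>_def L'_def by auto
        qed
      next
        case False
        note uT = False
        then have uT': "u \<in> T" using u by blast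
        show ?thesis
        proof (cases "v \<in> H")
          case True
          have ev: "E v u" using assms(1) e unfolding graph_def by blast
          have "\<not> M v u (\<phi>H v) (\<phi>T u)" using True uT' pH1 ev unfolding L'_def by auto
          then show ?thesis using True uT Msym unfolding \<phi>_def by auto
        next
          case False
          then have "v \<in> T" using v by blast
          then show ?thesis using uT' uT False pT2 e unfolding \<phi>_def MT_def by auto
        qed
      qed
    qed
    then show "\<exists>\<phi>. corr_colouring (H \<union> T) E L M \<phi>" by blast
  qed
  moreover have "H \<subset> H \<union> T" using Tne disj by blast
  moreover have "H \<union> T \<subseteq> V" using HV TV by blast
  ultimately show False using assms(3) by blast
qed

end
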